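(* Let $w>0$ and let $\rho_1,\rho_2:\mathbb R\to[0,\infty)$ be bounded unnormalised densities which are quasi-concave (every level set $\{x:\rho_i(x)\ge t\}$ is an interval) with nonempty $\arg\max\rho_i$ and \[ \inf_{r\in\arg\max\rho_1,\ s\in\arg\max\rho_2}|r-s|<w . \] Then $\rho_{\max}:=\max\{\rho_1,\rho_2\}\in\mathcal R_w$.
   Context: For $w>0$ and $\rho:\mathbb R\to[0,\infty)$ with level sets $K(t)=\{x:\rho(x)\ge t\}$, we write $\rho\in\mathcal R_w$ if there exist $t_1\le t_2$ in $[0,\|\rho\|_\infty]$ such that: (a) for all $t\in[0,t_1]\cup(t_2,\|\rho\|_\infty]$, $K(t)$ is an interval; (b) for all $t\in(t_1,t_2]$ there are disjoint intervals $K_1(t),K_2(t)$ with $K(t)=K_1(t)\cup K_2(t)$ and $K_i(t+\varepsilon)\subseteq K_i(t)$ for all $\varepsilon>0$, $i=1,2$; (c) for all $t\in[0,\|\rho\|_\infty]$, $\delta_t<w$, where $\delta_t=\inf_{r\in K_1(t),s\in K_2(t)}|r-s|$ for $t\in(t_1,t_2]$ and $\delta_t=0$ otherwise. *)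

theory Defs
  imports "HOL-Analysis.Analysis" "HOL-Library.Extended_Real"
begin

definition level_set :: "(real \<Rightarrow> real) \<Rightarrow> real \<Rightarrow> real set" where
  "level_set \<rho> t = {x. \<rho> x \<ge> t}"

definition sup_norm :: "(real \<Rightarrow> real) \<Rightarrow> real" where
  "sup_norm \<rho> = Sup (range \<rho>)"

definition arg_max_set :: "(real \<Rightarrow> real) \<Rightarrow> real set" where
  "arg_max_set \<rho> = {x. \<forall>y. \<rho> y \<le> \<rho> x}"

(* delta_t: infimum distance between K1(t) and K2(t) for t in (t1,t2], 0 otherwise;
   taken in ereal so that the infimum of the empty set is +infinity *)
definition delta_gap :: "(real \<Rightarrow> real set) \<Rightarrow> (real \<Rightarrow> real set) \<Rightarrow> real \<Rightarrow> real \<Rightarrow> real \<Rightarrow> ereal" where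
  "delta_gap K1 K2 t1 t2 t =
     (if t \<in> {t1<..t2} then Inf {ereal \<bar>r - s\<bar> | r s. r \<in> K1 t \<and> s \<in> K2 t} else 0)"

definition in_R :: "real \<Rightarrow> (real \<Rightarrow> real) \<Rightarrow> bool" where
  "in_R w \<rho> \<longleftrightarrow> (\<forall>x. 0 \<le> \<rho> x) \<and>
     (\<exists>t1 t2 K1 K2. 0 \<le> t1 \<and> t1 \<le> t2 \<and> t2 \<le> sup_norm \<rho> \<and>
        (\<forall>t \<in> {0..t1} \<union> {t2<..sup_norm \<rho>}. is_interval (level_set \<rho> t)) \<and>
        (\<forall>t \<in> {t1<..t2}. is_interval (K1 t) \<and> is_interval (K2 t) \<and> K1 t \<inter> K2 t = {} \<and>
             level_set \<rho> t = K1 t \<union> K2 t \<and>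
             (\<forall>\<epsilon>>0. t + \<epsilon> \<in> {t1<..t2} \<longrightarrow> K1 (t + \<epsilon>) \<subseteq> K1 t \<and> K2 (t + \<epsilon>) \<subseteq> K2 t)) \<and>
        (\<forall>t \<in> {0..sup_norm \<rho>}. delta_gap K1 K2 t1 t2 t < ereal w))"

end

theory Submission
  imports Defs
begin

lemma int_Un_real:
  fixes A B :: "real set"
  assumes "is_interval A" "is_interval B" "A \<inter> B \<noteq> {}"
  shows "is_interval (A \<union> B)"
  using assms by (simp add: is_interval_connected_1 connected_Un)

theorem lemma4p1:
  fixes w :: real and \<rho>1 \<rho>2 :: "real \<Rightarrow> real"
  assumes "w > 0"
    and "\<And>x. 0 \<le> \<rho>1 x" and "\<And>x. 0 \<le> \<rho>2 x"
    and "bdd_above (range \<rho>1)" and "bdd_above (range \<rho>2)"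
    and "\<And>t. is_interval (level_set \<rho>1 t)" and "\<And>t. is_interval (level_set \<rho>2 t)"
    and "arg_max_set \<rho>1 \<noteq> {}" and "arg_max_set \<rho>2 \<noteq> {}"
    and "Inf {\<bar>r - s\<bar> | r s. r \<in> arg_max_set \<rho>1 \<and> s \<in> arg_max_set \<rho>2} < w"
  shows "in_R w (\<lambda>x. max (\<rho>1 x) (\<rho>2 x))"
proof -
  define \<rho> where "\<rho> = (\<lambda>x. max (\<rho>1 x) (\<rho>2 x))"
  define L1 where "L1 = level_set \<rho>1"
  define L2 where "L2 = level_set \<rho>2"
  have LU: "level_set \<rho> t = L1 t \<union> L2 t" for t
    by (auto simp: level_set_def L1_def L2_def \<rho>_def)
  have I1: "is_interval (L1 t)" for t using assms(6) L1_def by simp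
  have I2: "is_interval (L2 t)" for t using assms(7) L2_def by simp
  let ?S = "{\<bar>r - s\<bar> | r s. r \<in> arg_max_set \<rho>1 \<and> s \<in> arg_max_set \<rho>2}"
  have "?S \<noteq> {}" using assms(8,9) by blast
  moreover have "bdd_below ?S" by (rule bdd_belowI[of _ 0]) auto
  ultimately obtain d where "d \<in> ?S" "d < w" using cInf_lessD[OF _ assms(10)] by blast
  then obtain a b where ab: "a \<in> arg_max_set \<rho>1" "b \<in> arg_max_set \<rho>2" "\<bar>a - b\<bar> < w" by blast
  have a: "\<And>y. \<rho>1 y \<le> \<rho>1 a" and b: "\<And>y. \<rho>2 y \<le> \<rho>2 b"
    using ab by (auto simp: arg_max_set_def)
  define m where "m = min (\<rho>1 a) (\<rho>2 b)"
  have m0: "0 \<le> m" using assms(2,3) by (simp add: m_def)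
  have bddr: "bdd_above (range \<rho>)"
  proof (rule bdd_aboveI[of _ "max (\<rho>1 a) (\<rho>2 b)"])
    fix x assume "x \<in> range \<rho>" thus "x \<le> max (\<rho>1 a) (\<rho>2 b)"
      using a b by (auto simp: \<rho>_def intro: max.coboundedI1 max.coboundedI2 max.mono)
  qed
  have mM: "m \<le> sup_norm \<rho>"
  proof -
    have "\<rho> a \<le> Sup (range \<rho>)" by (rule cSup_upper[OF _ bddr]) auto
    thus ?thesis unfolding sup_norm_def m_def \<rho>_def by (meson min.coboundedI1 max.bounded_iff)
  qed
  define T where "T = {t. 0 < t \<and> t \<le> m \<and> L1 t \<inter> L2 t \<noteq> {}}"
  define t1 where "t1 = Sup (insert 0 T)"
  have bddT: "bdd_above (insert 0 T)" by (rule bdd_aboveI[of _ m]) (auto simp: T_def m0)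
  have t10: "0 \<le> t1" unfolding t1_def by (rule cSup_upper[OF _ bddT]) auto
  have t1m: "t1 \<le> m" unfolding t1_def by (rule cSup_least) (auto simp: T_def m0)
  have mono1: "s \<le> t \<Longrightarrow> L1 t \<subseteq> L1 s" for s t by (auto simp: L1_def level_set_def)
  have mono2: "s \<le> t \<Longrightarrow> L2 t \<subseteq> L2 s" for s t by (auto simp: L2_def level_set_def)
  have below: "is_interval (level_set \<rho> s)" if "0 < s" "s < t1" for s
  proof -
    from less_cSupD[of "insert 0 T" s] that obtain u where "u \<in> insert 0 T" "s < u"
      unfolding t1_def by auto
    hence "u \<in> T" using that by auto
    hence "L1 u \<inter> L2 u \<noteq> {}" by (auto simp: T_def)
    moreover have "L1 u \<subseteq> L1 s" "L2 u \<subseteq> L2 s" using \<open>s < u\<close> mono1 mono2 by auto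
    ultimately have "L1 s \<inter> L2 s \<noteq> {}" by blast
    thus ?thesis unfolding LU using int_Un_real I1 I2 by blast
  qed
  have lowint: "is_interval (level_set \<rho> t)" if "t \<in> {0..t1}" for t
  proof (cases "t = 0")
    case True
    hence "level_set \<rho> t = UNIV" using assms(2) by (auto simp: level_set_def \<rho>_def intro: max.coboundedI1)
    thus ?thesis by simp
  next
    case False
    hence t0: "0 < t" using that by auto
    show ?thesis unfolding is_interval_1
    proof (intro ballI allI impI)
      fix x y z assume xy0: "x \<in> level_set \<rho> t" "y \<in> level_set \<rho> t" "x \<le> z \<and> z \<le> y"
      hence xy: "x \<in> level_set \<rho> t" "y \<in> level_set \<rho> t" "x \<le> z" "z \<le> y" by auto
      have "t \<le> \<rho> z"
      proof (rule dense_le_bounded[OF t0])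
        fix s assume s: "0 < s" "s < t"
        hence "s < t1" using that by auto
        have "x \<in> level_set \<rho> s" "y \<in> level_set \<rho> s" using xy s by (auto simp: level_set_def)
        hence "z \<in> level_set \<rho> s" using below[OF s(1) \<open>s < t1\<close>] xy(3,4)
          unfolding is_interval_1 by blast
        thus "s \<le> \<rho> z" by (simp add: level_set_def)
      qed
      thus "z \<in> level_set \<rho> t" by (simp add: level_set_def)
    qed
  qed
  have highint: "is_interval (level_set \<rho> t)" if "m < t" for t
  proof (cases "\<rho>1 a \<le> \<rho>2 b")
    case True
    hence "L1 t = {}" using that a by (auto simp: m_def L1_def level_set_def intro: antisym) (smt (verit) a)
    thus ?thesis using LU I2 by simp
  next
    case False
    hence "L2 t = {}" using that b by (auto simp: m_def L2_def level_set_def) (smt (verit) b)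
    thus ?thesis using LU I1 by simp
  qed
  have mid: "L1 t \<inter> L2 t = {}" if "t \<in> {t1<..m}" for t
  proof (rule ccontr)
    assume "L1 t \<inter> L2 t \<noteq> {}"
    hence "t \<in> insert 0 T" using that t10 by (auto simp: T_def)
    hence "t \<le> t1" unfolding t1_def by (rule cSup_upper[OF _ bddT])
    thus False using that by auto
  qed
  have gap: "delta_gap L1 L2 t1 m t < ereal w" for t
  proof (cases "t \<in> {t1<..m}")
    case True
    have "a \<in> L1 t" "b \<in> L2 t" using True by (auto simp: L1_def L2_def level_set_def m_def)
    hence "Inf {ereal \<bar>r - s\<bar> | r s. r \<in> L1 t \<and> s \<in> L2 t} \<le> ereal \<bar>a - b\<bar>"
      by (intro Inf_lower) blast
    also have "\<dots> < ereal w" using ab by simp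
    finally show ?thesis using True by (simp add: delta_gap_def)
  next
    case False thus ?thesis using assms(1) unfolding delta_gap_def by (simp only: if_False) simp
  qed
  have nonneg: "\<forall>x. 0 \<le> \<rho> x" using assms(2) by (simp add: \<rho>_def max.coboundedI1)
  have "in_R w \<rho>" unfolding in_R_def
    apply (rule conjI[OF nonneg])
    apply (rule exI[of _ t1], rule exI[of _ m], rule exI[of _ L1], rule exI[of _ L2])
  proof (intro conjI)
    show "0 \<le> t1" "t1 \<le> m" "m \<le> sup_norm \<rho>" by (fact t10 t1m mM)+
    show "\<forall>t\<in>{0..t1} \<union> {m<..sup_norm \<rho>}. is_interval (level_set \<rho> t)"
      using lowint highint by auto
    show "\<forall>t\<in>{t1<..m}. is_interval (L1 t) \<and> is_interval (L2 t) \<and> L1 t \<inter> L2 t = {} \<and>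
             level_set \<rho> t = L1 t \<union> L2 t \<and>
             (\<forall>\<epsilon>>0. t + \<epsilon> \<in> {t1<..m} \<longrightarrow> L1 (t + \<epsilon>) \<subseteq> L1 t \<and> L2 (t + \<epsilon>) \<subseteq> L2 t)"
      using I1 I2 mid LU mono1 mono2 by auto
    show "\<forall>t\<in>{0..sup_norm \<rho>}. delta_gap L1 L2 t1 m t < ereal w" using gap by auto
  qed
  thus ?thesis by (simp add: \<rho>_def)
qed

end
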